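(* For all integers $n\geq 3$ and $k\geq 2$, the digraph $M(n,k)$ is highly arc-transitive, has in-degree and out-degree equal to $n-1$ at every vertex, and does not have property $Z$.
   Context: Construction of $M(n,k)$: let $F=\langle a_1\rangle*\cdots*\langle a_n\rangle$ be the free product of $n$ cyclic groups of order $k$. Form the digraph $T^*$ with vertex set $F\times\{1,\dots,n\}$, arcs in both directions between $(v,i)$ and $(v,j)$ for all $v\in F$, $i\neq j$, and "cycle arcs" $(v,i)\to(va_i,i)$. Form $T^*\otimes\vec K_2$ with vertex set $VT^*\times\{-,+\}$ and an arc $(x,-)\to(y,+)$ whenever $x\to y$ in $T^*$. $M(n,k)$ is obtained by identifying $((v,i),-)$ with $((va_i,i),+)$ for all $v,i$ (contracting the arcs coming from cycle arcs), keeping the remaining arcs $((v,i),-)\to((v,j),+)$, $i\ne j$. A $k$-arc is a sequence $(x_0,\dots,x_k)$ of vertices with $x_i\to x_{i+1}$; a digraph is highly arc-transitive if its automorphism group is transitive on $k$-arcs for every $k$. A digraph has property $Z$ if there is a digraph homomorphism from it onto the two-way infinite directed line (vertex set $\mathbb{Z}$, arcs $i\to i+1$). *)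

theory Defs
  imports Main
begin

definition is_karc :: "'a set \<Rightarrow> ('a \<Rightarrow> 'a \<Rightarrow> bool) \<Rightarrow> nat \<Rightarrow> 'a list \<Rightarrow> bool" where
  "is_karc V A k xs \<longleftrightarrow> length xs = Suc k \<and> set xs \<subseteq> V \<and>
     (\<forall>j<k. A (xs ! j) (xs ! Suc j))"

definition digraph_aut :: "'a set \<Rightarrow> ('a \<Rightarrow> 'a \<Rightarrow> bool) \<Rightarrow> ('a \<Rightarrow> 'a) \<Rightarrow> bool" where
  "digraph_aut V A g \<longleftrightarrow> bij_betw g V V \<and> (\<forall>x\<in>V. \<forall>y\<in>V. A x y \<longleftrightarrow> A (g x) (g y))"

definition highly_arc_transitive :: "'a set \<Rightarrow> ('a \<Rightarrow> 'a \<Rightarrow> bool) \<Rightarrow> bool" where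
  "highly_arc_transitive V A \<longleftrightarrow>
     (\<forall>k xs ys. is_karc V A k xs \<and> is_karc V A k ys \<longrightarrow>
        (\<exists>g. digraph_aut V A g \<and> map g xs = ys))"

definition in_degree :: "'a set \<Rightarrow> ('a \<Rightarrow> 'a \<Rightarrow> bool) \<Rightarrow> 'a \<Rightarrow> nat" where
  "in_degree V A x = card {y\<in>V. A y x}"

definition out_degree :: "'a set \<Rightarrow> ('a \<Rightarrow> 'a \<Rightarrow> bool) \<Rightarrow> 'a \<Rightarrow> nat" where
  "out_degree V A x = card {y\<in>V. A x y}"

definition has_property_Z :: "'a set \<Rightarrow> ('a \<Rightarrow> 'a \<Rightarrow> bool) \<Rightarrow> bool" where
  "has_property_Z V A \<longleftrightarrow>
     (\<exists>f :: 'a \<Rightarrow> int. (\<forall>x\<in>V. \<forall>y\<in>V. A x y \<longrightarrow> f y = f x + 1) \<and> f ` V = UNIV)"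

text \<open>Generators are indexed a_0, ..., a_(n-1). An element of the free product is
  represented by its unique reduced word: a list of pairs (i,e) standing for a_i^e with
  i < n, 0 < e < k, and consecutive indices distinct.\<close>

type_synonym fpword = "(nat \<times> nat) list"

definition fp_words :: "nat \<Rightarrow> nat \<Rightarrow> fpword set" where
  "fp_words n k = {w. (\<forall>(i,e)\<in>set w. i < n \<and> 0 < e \<and> e < k) \<and>
                      (\<forall>j. Suc j < length w \<longrightarrow> fst (w ! j) \<noteq> fst (w ! Suc j))}"

text \<open>Right multiplication v \<mapsto> v a_i on reduced words.\<close>
definition fp_rmul_gen :: "nat \<Rightarrow> fpword \<Rightarrow> nat \<Rightarrow> fpword" where
  "fp_rmul_gen k w i =
     (if w \<noteq> [] \<and> fst (last w) = i
      then (if Suc (snd (last w)) = k then butlast w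
            else butlast w @ [(i, Suc (snd (last w)))])
      else w @ [(i, 1)])"

definition Tstar_verts :: "nat \<Rightarrow> nat \<Rightarrow> (fpword \<times> nat) set" where
  "Tstar_verts n k = fp_words n k \<times> {..<n}"

definition Tstar_arc :: "nat \<Rightarrow> nat \<Rightarrow> fpword \<times> nat \<Rightarrow> fpword \<times> nat \<Rightarrow> bool" where
  "Tstar_arc n k x y \<longleftrightarrow> x \<in> Tstar_verts n k \<and> y \<in> Tstar_verts n k \<and>
     ((fst x = fst y \<and> snd x \<noteq> snd y) \<or>
      (snd y = snd x \<and> fst y = fp_rmul_gen k (fst x) (snd x)))"

text \<open>T* \<otimes> K_2: vertex set VT* \<times> {-,+}, encoded with False = - and True = +.\<close>
definition TK_verts :: "nat \<Rightarrow> nat \<Rightarrow> ((fpword \<times> nat) \<times> bool) set" where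
  "TK_verts n k = Tstar_verts n k \<times> UNIV"

definition TK_arc :: "nat \<Rightarrow> nat \<Rightarrow> (fpword \<times> nat) \<times> bool \<Rightarrow> (fpword \<times> nat) \<times> bool \<Rightarrow> bool" where
  "TK_arc n k p q \<longleftrightarrow> snd p = False \<and> snd q = True \<and> Tstar_arc n k (fst p) (fst q)"

definition M_ident :: "nat \<Rightarrow> nat \<Rightarrow> (((fpword \<times> nat) \<times> bool) \<times> ((fpword \<times> nat) \<times> bool)) set" where
  "M_ident n k = {(((v,i),False), ((fp_rmul_gen k v i, i), True)) | v i. (v,i) \<in> Tstar_verts n k}"

definition M_verts :: "nat \<Rightarrow> nat \<Rightarrow> ((fpword \<times> nat) \<times> bool) set set" where
  "M_verts n k = TK_verts n k // ((M_ident n k \<union> (M_ident n k)\<inverse>)\<^sup>*)"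

definition M_arc :: "nat \<Rightarrow> nat \<Rightarrow> ((fpword \<times> nat) \<times> bool) set \<Rightarrow> ((fpword \<times> nat) \<times> bool) set \<Rightarrow> bool" where
  "M_arc n k X Y \<longleftrightarrow> X \<in> M_verts n k \<and> Y \<in> M_verts n k \<and>
     (\<exists>x\<in>X. \<exists>y\<in>Y. TK_arc n k x y \<and> (x, y) \<notin> M_ident n k)"

end

theory Submission
  imports Defs
begin


lemma fpw_iff: "w \<in> fp_words n k \<longleftrightarrow>
   (\<forall>x\<in>set w. fst x < n \<and> 0 < snd x \<and> snd x < k) \<and> successively (\<lambda>x y. fst x \<noteq> fst y) w"
  unfolding fp_words_def successively_conv_nth by (auto simp: split_beta)

lemma fpw_Nil[simp]: "[] \<in> fp_words n k"
  by (simp add: fpw_iff)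

lemma fpw_append: "xs @ ys \<in> fp_words n k \<longleftrightarrow> xs \<in> fp_words n k \<and> ys \<in> fp_words n k \<and>
   (xs = [] \<or> ys = [] \<or> fst (last xs) \<noteq> fst (hd ys))"
  unfolding fpw_iff successively_append_iff by auto

lemma fpw_Cons: "s # r \<in> fp_words n k \<longleftrightarrow> fst s < n \<and> 0 < snd s \<and> snd s < k \<and> r \<in> fp_words n k \<and>
   (r = [] \<or> fst s \<noteq> fst (hd r))"
  unfolding fpw_iff successively_Cons by auto

lemma fpw_single[simp]: "[s] \<in> fp_words n k \<longleftrightarrow> fst s < n \<and> 0 < snd s \<and> snd s < k"
  by (simp add: fpw_Cons)

lemma fpw_rev: "rev w \<in> fp_words n k \<longleftrightarrow> w \<in> fp_words n k"
proof -
  have "successively (\<lambda>x y. fst y \<noteq> fst x) w = successively (\<lambda>(x::nat\<times>nat) y. fst x \<noteq> fst y) w"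
    by (rule successively_cong) auto
  then show ?thesis unfolding fpw_iff by simp
qed

definition ends :: "nat \<Rightarrow> fpword \<Rightarrow> bool" where
  "ends i w \<longleftrightarrow> w \<noteq> [] \<and> fst (last w) = i"

abbreviation rp :: "nat \<Rightarrow> nat \<Rightarrow> nat \<Rightarrow> fpword \<Rightarrow> fpword" where
  "rp k i m \<equiv> (\<lambda>w. fp_rmul_gen k w i) ^^ m"

lemma rm_not_end: "\<not> ends i w \<Longrightarrow> fp_rmul_gen k w i = w @ [(i,1)]"
  by (auto simp: fp_rmul_gen_def ends_def)

lemma rm_end: "fp_rmul_gen k (u @ [(i,e)]) i = (if Suc e = k then u else u @ [(i, Suc e)])"
  by (simp add: fp_rmul_gen_def)

lemma ends_split: "ends i w \<Longrightarrow> \<exists>u e. w = u @ [(i,e)]"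
  unfolding ends_def by (metis append_butlast_last_id prod.collapse)

lemma rm_fpw:
  assumes "w \<in> fp_words n k" "i < n" "k \<ge> 2"
  shows "fp_rmul_gen k w i \<in> fp_words n k"
proof (cases "ends i w")
  case True
  then obtain u e where w: "w = u @ [(i,e)]" using ends_split by blast
  then show ?thesis using assms by (auto simp: rm_end fpw_append)
next
  case False
  then show ?thesis using assms by (auto simp: rm_not_end fpw_append ends_def)
qed

lemma rp_fpw: "w \<in> fp_words n k \<Longrightarrow> i < n \<Longrightarrow> k \<ge> 2 \<Longrightarrow> rp k i m w \<in> fp_words n k"
  by (induction m) (auto simp: rm_fpw)

lemma rp_not_end: "\<not> ends i w \<Longrightarrow> 0 < m \<Longrightarrow> m < k \<Longrightarrow> rp k i m w = w @ [(i,m)]"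
proof (induction m)
  case 0 then show ?case by simp
next
  case (Suc m)
  show ?case
  proof (cases m)
    case 0 then show ?thesis using Suc by (simp add: rm_not_end)
  next
    case (Suc m') then show ?thesis using Suc.IH Suc.prems by (simp add: rm_end)
  qed
qed

lemma rp_k_not_end: assumes "\<not> ends i w" "k \<ge> 2" shows "rp k i k w = w"
proof -
  have k: "k = Suc (k-1)" using assms by simp
  have "rp k i k w = fp_rmul_gen k (rp k i (k-1) w) i" by (subst k) simp
  also have "\<dots> = fp_rmul_gen k (w @ [(i,k-1)]) i" using assms by (simp add: rp_not_end)
  also have "\<dots> = w" using assms by (simp add: rm_end)
  finally show ?thesis .
qed

lemma rp_k: assumes "w \<in> fp_words n k" "k \<ge> 2" shows "rp k i k w = w"
proof (cases "ends i w")
  case False then show ?thesis using rp_k_not_end assms by blast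
next
  case True
  then obtain u e where w: "w = u @ [(i,e)]" using ends_split by blast
  have u: "\<not> ends i u" "0 < e" "e < k" using assms(1) unfolding w
    by (auto simp: fpw_append ends_def)
  have w2: "w = rp k i e u" using rp_not_end[OF u(1) u(2) u(3)] w by simp
  have "rp k i k w = rp k i (k + e) u" by (simp add: w2 funpow_add)
  also have "\<dots> = rp k i e (rp k i k u)" by (simp add: funpow_add add.commute)
  also have "\<dots> = w" using rp_k_not_end[OF u(1) assms(2)] w2 by simp
  finally show ?thesis .
qed

lemma rp_pred: assumes "w \<in> fp_words n k" "k \<ge> 2"
  shows "rp k i (k-1) (fp_rmul_gen k w i) = w" "fp_rmul_gen k (rp k i (k-1) w) i = w"
proof -
  have k: "k = Suc (k-1)" using assms by simp
  have "rp k i k w = w" using rp_k assms by blast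
  then show "rp k i (k-1) (fp_rmul_gen k w i) = w" "fp_rmul_gen k (rp k i (k-1) w) i = w"
    by (metis k funpow_Suc_right o_apply funpow.simps(2))+
qed

lemma rm_inj: assumes "w \<in> fp_words n k" "w' \<in> fp_words n k" "k \<ge> 2"
   "fp_rmul_gen k w i = fp_rmul_gen k w' i" shows "w = w'"
  using rp_pred(1)[OF assms(1,3), of i] rp_pred(1)[OF assms(2,3), of i] assms(4) by simp

lemma rm_Cons: "r \<noteq> [] \<Longrightarrow> fp_rmul_gen k (s # r) i = s # fp_rmul_gen k r i"
  by (simp add: fp_rmul_gen_def)

definition lm :: "nat \<Rightarrow> nat \<Rightarrow> fpword \<Rightarrow> fpword" where
  "lm k j w = rev (fp_rmul_gen k (rev w) j)"

lemma lm_Nil: "lm k j [] = [(j,1)]"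
  by (simp add: lm_def fp_rmul_gen_def)

lemma lm_Cons: "lm k j (s # r) = (if fst s = j then (if Suc (snd s) = k then r else (j, Suc (snd s)) # r)
    else (j,1) # s # r)"
  by (cases s) (simp add: lm_def fp_rmul_gen_def)

lemma lm_fpw: "w \<in> fp_words n k \<Longrightarrow> j < n \<Longrightarrow> k \<ge> 2 \<Longrightarrow> lm k j w \<in> fp_words n k"
  unfolding lm_def by (simp add: fpw_rev rm_fpw)

lemma lp: "(lm k j ^^ m) w = rev (rp k j m (rev w))"
  by (induction m) (auto simp: lm_def)

lemma lp_k: "w \<in> fp_words n k \<Longrightarrow> k \<ge> 2 \<Longrightarrow> (lm k j ^^ k) w = w"
  by (simp add: lp rp_k fpw_rev)

lemma lm_inj: assumes "w \<in> fp_words n k" "w' \<in> fp_words n k" "k \<ge> 2"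
   "lm k j w = lm k j w'" shows "w = w'"
  using assms rm_inj[of "rev w" n k "rev w'" j] by (simp add: lm_def fpw_rev)

lemma lm_rm_comm: assumes "w \<in> fp_words n k"
  shows "lm k j (fp_rmul_gen k w i) = fp_rmul_gen k (lm k j w) i"
proof (cases w)
  case Nil then show ?thesis by (auto simp: lm_Cons lm_Nil fp_rmul_gen_def)
next
  case (Cons s r)
  show ?thesis
  proof (cases r)
    case Nil then show ?thesis using Cons by (cases s) (auto simp: lm_Cons lm_Nil fp_rmul_gen_def)
  next
    case (Cons t r')
    have "lm k j (fp_rmul_gen k w i) = lm k j (s # fp_rmul_gen k r i)" using Cons \<open>w = s # r\<close> by (simp add: rm_Cons)
    also have "\<dots> = fp_rmul_gen k (lm k j w) i" using Cons \<open>w = s # r\<close> by (auto simp: lm_Cons rm_Cons)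
    finally show ?thesis .
  qed
qed



definition DE :: "nat \<Rightarrow> nat \<Rightarrow> fpword \<times> nat \<Rightarrow> fpword \<times> nat \<Rightarrow> bool" where
  "DE n k x y \<longleftrightarrow> x \<in> Tstar_verts n k \<and> y \<in> Tstar_verts n k \<and> snd x \<noteq> snd y \<and>
     fst x = fp_rmul_gen k (fst y) (snd y)"

definition hM :: "nat \<Rightarrow> fpword \<times> nat \<Rightarrow> ((fpword \<times> nat) \<times> bool) set" where
  "hM k x = {(x,False), ((fp_rmul_gen k (fst x) (snd x), snd x), True)}"

lemma Tv_iff: "(w,i) \<in> Tstar_verts n k \<longleftrightarrow> w \<in> fp_words n k \<and> i < n"
  by (simp add: Tstar_verts_def)

lemma MI_iff: "(a,b) \<in> M_ident n k \<longleftrightarrow> snd a = False \<and> fst a \<in> Tstar_verts n k \<and>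
    b = ((fp_rmul_gen k (fst (fst a)) (snd (fst a)), snd (fst a)), True)"
  by (cases a; cases "fst a") (auto simp: M_ident_def)

context
  fixes n k :: nat
  assumes k2: "k \<ge> 2"
begin

abbreviation "RR \<equiv> M_ident n k \<union> (M_ident n k)\<inverse>"

lemma RR_RR: assumes "(a,b) \<in> RR" "(b,c) \<in> RR" shows "a = c"
proof -
  have "(a,b) \<in> M_ident n k \<and> (c,b) \<in> M_ident n k \<or> (b,a) \<in> M_ident n k \<and> (b,c) \<in> M_ident n k"
    using assms by (auto simp: MI_iff)
  then show ?thesis
  proof
    assume h: "(a,b) \<in> M_ident n k \<and> (c,b) \<in> M_ident n k"
    obtain v i b1 where a: "a = ((v,i),b1)" by (metis prod.collapse)
    obtain v' i' b2 where c: "c = ((v',i'),b2)" by (metis prod.collapse)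
    from h have "i = i'" "b1 = False" "b2 = False" "v \<in> fp_words n k" "v' \<in> fp_words n k"
      "fp_rmul_gen k v i = fp_rmul_gen k v' i'" by (auto simp: MI_iff a c Tv_iff)
    then have "v = v'" using rm_inj[OF _ _ k2, of v n v' i] by simp
    then show ?thesis using a c \<open>i = i'\<close> \<open>b1 = False\<close> \<open>b2 = False\<close> by simp
  next
    assume h: "(b,a) \<in> M_ident n k \<and> (b,c) \<in> M_ident n k"
    then show ?thesis by (auto simp: MI_iff)
  qed
qed

lemma RR_rtr: "(a,b) \<in> RR\<^sup>* \<longleftrightarrow> a = b \<or> (a,b) \<in> RR"
proof
  assume "(a,b) \<in> RR\<^sup>*"
  then show "a = b \<or> (a,b) \<in> RR"
  proof (induction rule: rtrancl_induct)
    case base then show ?case by simp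
  next
    case (step y z) then show ?case using RR_RR by blast
  qed
qed auto

lemma class_minus: assumes "x \<in> Tstar_verts n k" shows "RR\<^sup>* `` {(x,False)} = hM k x"
  using assms by (auto simp: RR_rtr MI_iff hM_def)

lemma class_plus: assumes "(w,i) \<in> Tstar_verts n k"
  shows "RR\<^sup>* `` {((w,i),True)} = hM k (rp k i (k-1) w, i)"
proof -
  have w: "w \<in> fp_words n k" "i < n" using assms by (auto simp: Tv_iff)
  have v: "(rp k i (k-1) w, i) \<in> Tstar_verts n k" using w rp_fpw k2 by (simp add: Tv_iff)
  have e: "fp_rmul_gen k (rp k i (k-1) w) i = w" using rp_pred(2)[OF w(1) k2] .
  have u: "u = rp k i (k-1) w" if "u \<in> fp_words n k" "fp_rmul_gen k u i = w" for u
    using rp_pred(1)[OF that(1) k2, of i] that(2) by simp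
  show ?thesis
  proof (intro equalityI subsetI)
    fix z assume "z \<in> RR\<^sup>* `` {((w,i),True)}"
    hence "z = ((w,i),True) \<or> (z, ((w,i),True)) \<in> M_ident n k" by (auto simp: RR_rtr MI_iff)
    then show "z \<in> hM k (rp k i (k-1) w, i)"
    proof
      assume "z = ((w,i),True)" then show ?thesis using e by (simp add: hM_def)
    next
      assume h: "(z, ((w,i),True)) \<in> M_ident n k"
      obtain u j b where z: "z = ((u,j),b)" by (metis prod.collapse)
      from h have "b = False" "j = i" "u \<in> fp_words n k" "fp_rmul_gen k u j = w"
        by (auto simp: MI_iff z Tv_iff)
      then show ?thesis using u z by (simp add: hM_def)
    qed
  next
    fix z assume "z \<in> hM k (rp k i (k-1) w, i)"
    then have "z = ((rp k i (k-1) w, i),False) \<or> z = ((w,i),True)" using e by (simp add: hM_def)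
    then show "z \<in> RR\<^sup>* `` {((w,i),True)}"
    proof
      assume z: "z = ((rp k i (k-1) w, i),False)"
      have "(z, ((w,i),True)) \<in> M_ident n k" unfolding MI_iff z using v e by simp
      then show ?thesis by (simp add: RR_rtr)
    qed simp
  qed
qed

lemma M_verts_eq: "M_verts n k = hM k ` Tstar_verts n k"
proof -
  have "M_verts n k = (\<Union>z\<in>TK_verts n k. {RR\<^sup>* `` {z}})"
    by (simp add: M_verts_def quotient_def)
  also have "\<dots> = hM k ` Tstar_verts n k"
  proof (intro equalityI subsetI)
    fix X assume "X \<in> (\<Union>z\<in>TK_verts n k. {RR\<^sup>* `` {z}})"
    then obtain x b where xb: "x \<in> Tstar_verts n k" "X = RR\<^sup>* `` {(x,b)}"
      by (auto simp: TK_verts_def)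
    show "X \<in> hM k ` Tstar_verts n k"
    proof (cases b)
      case True
      obtain w i where x: "x = (w,i)" by (cases x)
      have "(rp k i (k-1) w, i) \<in> Tstar_verts n k" using xb x rp_fpw k2 by (simp add: Tv_iff)
      moreover have "X = hM k (rp k i (k-1) w, i)" using class_plus[of w i] xb x True by simp
      ultimately show ?thesis by blast
    next
      case False then show ?thesis using class_minus xb by auto
    qed
  next
    fix X assume "X \<in> hM k ` Tstar_verts n k"
    then obtain x where "x \<in> Tstar_verts n k" "X = hM k x" by auto
    then have "X = RR\<^sup>* `` {(x,False)}" "(x,False) \<in> TK_verts n k"
      using class_minus by (auto simp: TK_verts_def)
    then show "X \<in> (\<Union>z\<in>TK_verts n k. {RR\<^sup>* `` {z}})" by blast
  qed
  finally show ?thesis .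
qed

lemma hM_inj: "inj_on (hM k) (Tstar_verts n k)"
  by (rule inj_onI) (auto simp: hM_def doubleton_eq_iff)

lemma hM_arc: assumes "x \<in> Tstar_verts n k" "y \<in> Tstar_verts n k"
  shows "M_arc n k (hM k x) (hM k y) \<longleftrightarrow> DE n k x y"
proof -
  obtain v i where x: "x = (v,i)" by (cases x)
  obtain u j where y: "y = (u,j)" by (cases y)
  have ry: "(fp_rmul_gen k u j, j) \<in> Tstar_verts n k" using assms y rm_fpw k2 by (auto simp: Tv_iff)
  have mem: "hM k x \<in> M_verts n k" "hM k y \<in> M_verts n k" using assms M_verts_eq by auto
  have "M_arc n k (hM k x) (hM k y) \<longleftrightarrow> TK_arc n k ((v,i),False) ((fp_rmul_gen k u j,j),True) \<and>
     (((v,i),False),((fp_rmul_gen k u j,j),True)) \<notin> M_ident n k"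
    unfolding M_arc_def using mem by (auto simp: hM_def TK_arc_def x y)
  also have "\<dots> \<longleftrightarrow> DE n k x y"
    using assms ry by (auto simp: TK_arc_def Tstar_arc_def MI_iff DE_def x y)
  finally show ?thesis .
qed

end


section \<open>Isomorphism transfer\<close>

locale diso =
  fixes V :: "'a set" and A :: "'a \<Rightarrow> 'a \<Rightarrow> bool" and W :: "'b set" and B :: "'b \<Rightarrow> 'b \<Rightarrow> bool"
    and h :: "'a \<Rightarrow> 'b"
  assumes bij: "bij_betw h V W"
    and arc: "\<And>x y. x \<in> V \<Longrightarrow> y \<in> V \<Longrightarrow> A x y \<longleftrightarrow> B (h x) (h y)"
    and Bin: "\<And>x y. B x y \<Longrightarrow> x \<in> W \<and> y \<in> W"
begin

lemma inj: "inj_on h V" using bij by (simp add: bij_betw_def)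
lemma img: "h ` V = W" using bij by (simp add: bij_betw_def)

lemma hV: "x \<in> V \<Longrightarrow> h x \<in> W" using img by blast

lemma in_deg: assumes "x \<in> V" shows "in_degree W B (h x) = in_degree V A x"
proof -
  have "{Y\<in>W. B Y (h x)} = h ` {y\<in>V. A y x}"
  proof (intro equalityI subsetI)
    fix Y assume Y: "Y \<in> {Y\<in>W. B Y (h x)}"
    then obtain y where y: "y \<in> V" "Y = h y" using img by blast
    then have "A y x" using Y arc[OF y(1) assms] by simp
    then show "Y \<in> h ` {y\<in>V. A y x}" using y by blast
  next
    fix Y assume "Y \<in> h ` {y\<in>V. A y x}"
    then obtain y where y: "y \<in> V" "Y = h y" "A y x" by blast
    then show "Y \<in> {Y\<in>W. B Y (h x)}" using hV arc[OF y(1) assms] by simp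
  qed
  moreover have "inj_on h {y\<in>V. A y x}" using inj by (rule inj_on_subset) blast
  ultimately show ?thesis unfolding in_degree_def by (simp add: card_image)
qed

lemma out_deg: assumes "x \<in> V" shows "out_degree W B (h x) = out_degree V A x"
proof -
  have "{Y\<in>W. B (h x) Y} = h ` {y\<in>V. A x y}"
  proof (intro equalityI subsetI)
    fix Y assume Y: "Y \<in> {Y\<in>W. B (h x) Y}"
    then obtain y where y: "y \<in> V" "Y = h y" using img by blast
    then have "A x y" using Y arc[OF assms y(1)] by simp
    then show "Y \<in> h ` {y\<in>V. A x y}" using y by blast
  next
    fix Y assume "Y \<in> h ` {y\<in>V. A x y}"
    then obtain y where y: "y \<in> V" "Y = h y" "A x y" by blast
    then show "Y \<in> {Y\<in>W. B (h x) Y}" using hV arc[OF assms y(1)] by simp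
  qed
  moreover have "inj_on h {y\<in>V. A x y}" using inj by (rule inj_on_subset) blast
  ultimately show ?thesis unfolding out_degree_def by (simp add: card_image)
qed

lemma Z: assumes "has_property_Z W B"
  shows "\<exists>f::'a \<Rightarrow> int. \<forall>x\<in>V. \<forall>y\<in>V. A x y \<longrightarrow> f y = f x + 1"
proof -
  obtain F :: "'b \<Rightarrow> int" where F: "\<forall>x\<in>W. \<forall>y\<in>W. B x y \<longrightarrow> F y = F x + 1"
    using assms unfolding has_property_Z_def by blast
  have "\<forall>x\<in>V. \<forall>y\<in>V. A x y \<longrightarrow> (F \<circ> h) y = (F \<circ> h) x + 1"
  proof (intro ballI impI)
    fix x y assume xy: "x \<in> V" "y \<in> V" "A x y"
    then have "B (h x) (h y)" using arc by blast
    then show "(F \<circ> h) y = (F \<circ> h) x + 1" using F hV xy by simp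
  qed
  then show ?thesis by blast
qed

lemma HAT: assumes "highly_arc_transitive V A" shows "highly_arc_transitive W B"
  unfolding highly_arc_transitive_def
proof (intro allI impI)
  fix m XS YS assume H: "is_karc W B m XS \<and> is_karc W B m YS"
  define h' where "h' = inv_into V h"
  have h'V: "h' X \<in> V" if "X \<in> W" for X using that img h'_def by (metis inv_into_into)
  have hh': "h (h' X) = X" if "X \<in> W" for X using that img h'_def by (simp add: f_inv_into_f)
  have h'h: "h' (h x) = x" if "x \<in> V" for x using that inj h'_def by simp
  have karc: "is_karc V A m (map h' ZS)" if "is_karc W B m ZS" for ZS
  proof -
    have len: "length ZS = Suc m" and sub: "set ZS \<subseteq> W" and ar: "\<forall>j<m. B (ZS ! j) (ZS ! Suc j)"
      using that unfolding is_karc_def by auto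
    have "\<forall>j<m. A (h' (ZS ! j)) (h' (ZS ! Suc j))"
    proof (intro allI impI)
      fix j assume j: "j < m"
      have "ZS ! j \<in> W" "ZS ! Suc j \<in> W" using sub len j by (auto simp: nth_mem subsetD)
      then show "A (h' (ZS ! j)) (h' (ZS ! Suc j))" using arc h'V hh' ar j by simp
    qed
    then show ?thesis using len sub h'V unfolding is_karc_def by (auto simp: len)
  qed
  obtain g where g: "digraph_aut V A g" "map g (map h' XS) = map h' YS"
    using assms karc H unfolding highly_arc_transitive_def by blast
  define G where "G = h \<circ> g \<circ> h'"
  have gb: "bij_betw g V V" and garc: "\<forall>x\<in>V. \<forall>y\<in>V. A x y \<longleftrightarrow> A (g x) (g y)"
    using g(1) unfolding digraph_aut_def by auto
  have gV: "g x \<in> V" if "x \<in> V" for x using gb that bij_betwE by blast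
  have "bij_betw h' W V" using bij h'_def by (simp add: bij_betw_inv_into)
  then have "bij_betw G W W" unfolding G_def using bij gb
    by (metis bij_betw_trans comp_assoc)
  moreover have "\<forall>X\<in>W. \<forall>Y\<in>W. B X Y \<longleftrightarrow> B (G X) (G Y)"
  proof (intro ballI)
    fix X Y assume XY: "X \<in> W" "Y \<in> W"
    have "B X Y \<longleftrightarrow> A (h' X) (h' Y)" using arc h'V hh' XY by simp
    also have "\<dots> \<longleftrightarrow> A (g (h' X)) (g (h' Y))" using garc h'V XY by blast
    also have "\<dots> \<longleftrightarrow> B (G X) (G Y)" using arc gV h'V XY by (simp add: G_def)
    finally show "B X Y \<longleftrightarrow> B (G X) (G Y)" .
  qed
  ultimately have "digraph_aut W B G" unfolding digraph_aut_def by blast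
  moreover have "map G XS = YS"
  proof -
    have "map G XS = map h (map g (map h' XS))" by (simp add: G_def)
    also have "\<dots> = map h (map h' YS)" using g(2) by simp
    also have "\<dots> = YS" using H hh' unfolding is_karc_def by (simp add: map_idI subset_iff)
    finally show ?thesis .
  qed
  ultimately show "\<exists>g. digraph_aut W B g \<and> map g XS = YS" by blast
qed

end

section \<open>Degrees and property Z for D\<close>

context
  fixes n k :: nat
  assumes k2: "k \<ge> 2"
begin

lemma DE_in: "DE n k x y \<Longrightarrow> x \<in> Tstar_verts n k \<and> y \<in> Tstar_verts n k"
  by (simp add: DE_def)

lemma D_out_deg: assumes "x \<in> Tstar_verts n k"
  shows "out_degree (Tstar_verts n k) (DE n k) x = n - 1"
proof -
  obtain v i where x: "x = (v,i)" by (cases x)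
  have v: "v \<in> fp_words n k" "i < n" using assms x by (auto simp: Tv_iff)
  have "{y \<in> Tstar_verts n k. DE n k x y} = (\<lambda>j. (rp k j (k-1) v, j)) ` ({..<n} - {i})"
  proof (intro equalityI subsetI)
    fix y assume "y \<in> {y \<in> Tstar_verts n k. DE n k x y}"
    then obtain u j where y: "y = (u,j)" "u \<in> fp_words n k" "j < n" "j \<noteq> i" "v = fp_rmul_gen k u j"
      by (cases y) (auto simp: DE_def x Tv_iff)
    then have "u = rp k j (k-1) v" using rp_pred(1)[OF y(2) k2, of j] by simp
    then show "y \<in> (\<lambda>j. (rp k j (k-1) v, j)) ` ({..<n} - {i})" using y by auto
  next
    fix y assume "y \<in> (\<lambda>j. (rp k j (k-1) v, j)) ` ({..<n} - {i})"
    then obtain j where y: "y = (rp k j (k-1) v, j)" "j < n" "j \<noteq> i" by auto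
    then show "y \<in> {y \<in> Tstar_verts n k. DE n k x y}"
      using v rp_fpw[OF v(1) y(2) k2] rp_pred(2)[OF v(1) k2, of j]
      by (auto simp: DE_def x Tv_iff)
  qed
  moreover have "inj_on (\<lambda>j. (rp k j (k-1) v, j)) ({..<n} - {i})" by (rule inj_onI) simp
  ultimately show ?thesis unfolding out_degree_def using v by (simp add: card_image)
qed

lemma D_in_deg: assumes "x \<in> Tstar_verts n k"
  shows "in_degree (Tstar_verts n k) (DE n k) x = n - 1"
proof -
  obtain u j where x: "x = (u,j)" by (cases x)
  have u: "u \<in> fp_words n k" "j < n" using assms x by (auto simp: Tv_iff)
  have "{y \<in> Tstar_verts n k. DE n k y x} = (\<lambda>i. (fp_rmul_gen k u j, i)) ` ({..<n} - {j})"
    using u rm_fpw[OF u k2] by (auto simp: DE_def x Tv_iff)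
  moreover have "inj_on (\<lambda>i. (fp_rmul_gen k u j, i)) ({..<n} - {j})" by (rule inj_onI) simp
  ultimately show ?thesis unfolding in_degree_def using u by (simp add: card_image)
qed

lemma D_noZ: assumes n3: "n \<ge> 3"
  shows "\<not> (\<exists>f::fpword \<times> nat \<Rightarrow> int. \<forall>x\<in>Tstar_verts n k. \<forall>y\<in>Tstar_verts n k.
            DE n k x y \<longrightarrow> f y = f x + 1)"
proof
  assume "\<exists>f::fpword \<times> nat \<Rightarrow> int. \<forall>x\<in>Tstar_verts n k. \<forall>y\<in>Tstar_verts n k. DE n k x y \<longrightarrow> f y = f x + 1"
  then obtain f :: "fpword \<times> nat \<Rightarrow> int" where f: "\<And>x y. x \<in> Tstar_verts n k \<Longrightarrow> y \<in> Tstar_verts n k \<Longrightarrow>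
       DE n k x y \<Longrightarrow> f y = f x + 1" by blast
  have c1: "f (w,i) = f (w,i')" if w: "w \<in> fp_words n k" "i < n" "i' < n" for w i i'
  proof -
    obtain j where j: "j < n" "j \<noteq> i" "j \<noteq> i'"
    proof -
      have "\<exists>j\<in>{0,1,2::nat}. j \<noteq> i \<and> j \<noteq> i'" by auto
      then obtain j where "j \<in> {0,1,2::nat}" "j \<noteq> i" "j \<noteq> i'" by blast
      moreover then have "j < n" using n3 by auto
      ultimately show ?thesis using that by blast
    qed
    define y where "y = (rp k j (k-1) w, j)"
    have yV: "y \<in> Tstar_verts n k" using rp_fpw[OF w(1) j(1) k2] j by (simp add: y_def Tv_iff)
    have "DE n k (w,i) y" "DE n k (w,i') y"
      using yV w j rp_pred(2)[OF w(1) k2, of j] by (auto simp: DE_def y_def Tv_iff)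
    then have "f y = f (w,i) + 1" "f y = f (w,i') + 1" using f yV w by (auto simp: Tv_iff)
    then show ?thesis by simp
  qed
  have c2: "f (u,0) = f (fp_rmul_gen k u j, 0) + 1" if u: "u \<in> fp_words n k" "j < n" for u j
  proof -
    define i where "i = (if j = 0 then 1 else (0::nat))"
    have i: "i < n" "i \<noteq> j" using n3 by (auto simp: i_def)
    have rV: "fp_rmul_gen k u j \<in> fp_words n k" using rm_fpw[OF u k2] .
    have "DE n k (fp_rmul_gen k u j, i) (u, j)" using rV u i by (auto simp: DE_def Tv_iff)
    then have "f (u,j) = f (fp_rmul_gen k u j, i) + 1" using f rV u i by (auto simp: Tv_iff)
    moreover have "f (u,j) = f (u,0)" using c1[OF u(1) u(2), of 0] n3 by linarith
    moreover have "f (fp_rmul_gen k u j, i) = f (fp_rmul_gen k u j, 0)" using c1[OF rV i(1), of 0] n3 by linarith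
    ultimately show ?thesis by simp
  qed
  have c3: "f (u,0) = f (rp k 0 m u, 0) + int m" if u: "u \<in> fp_words n k" for u m
  proof (induction m)
    case 0 then show ?case by simp
  next
    case (Suc m)
    have "rp k 0 m u \<in> fp_words n k" using rp_fpw[OF u _ k2] n3 by simp
    from c2[OF this, of 0] n3 have "f (rp k 0 m u, 0) = f (rp k 0 (Suc m) u, 0) + 1" by simp
    then show ?case using Suc by simp
  qed
  have "f ([],0) = f ([],0) + int k" using c3[of "[]" k] rp_k[of "[]" n k 0] k2 by simp
  then show False using k2 by simp
qed

end


definition sw :: "nat \<Rightarrow> nat \<Rightarrow> nat \<Rightarrow> nat" where
  "sw a b x = (if x = a then b else if x = b then a else x)"

lemma sw_sw[simp]: "sw a b (sw a b x) = x" by (simp add: sw_def)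
lemma sw_inj[simp]: "sw a b x = sw a b y \<longleftrightarrow> x = y" by (auto simp: sw_def)
lemma sw_lt: "x < n \<Longrightarrow> a < n \<Longrightarrow> b < n \<Longrightarrow> sw a b x < n" by (simp add: sw_def)
lemma sw_fix: "x \<noteq> a \<Longrightarrow> x \<noteq> b \<Longrightarrow> sw a b x = x" by (simp add: sw_def)

definition smap :: "nat \<Rightarrow> nat \<Rightarrow> fpword \<Rightarrow> fpword" where
  "smap a b d = map (\<lambda>(i,e). (sw a b i, e)) d"

lemma smap_smap[simp]: "smap a b (smap a b d) = d"
  by (induction d) (auto simp: smap_def)

lemma smap_Nil2[simp]: "smap a b [] = []" by (simp add: smap_def)
lemma smap_Nil[simp]: "smap a b d = [] \<longleftrightarrow> d = []" by (simp add: smap_def)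
lemma smap_append[simp]: "smap a b (x @ y) = smap a b x @ smap a b y" by (simp add: smap_def)
lemma smap_single[simp]: "smap a b [(i,e)] = [(sw a b i, e)]" by (simp add: smap_def)

lemma rm_smap: "fp_rmul_gen k (smap a b d) (sw a b j) = smap a b (fp_rmul_gen k d j)"
proof (cases "d = []")
  case True then show ?thesis by (simp add: fp_rmul_gen_def)
next
  case False
  then obtain u s where d: "d = u @ [s]" by (cases d rule: rev_cases) auto
  obtain i e where s: "s = (i,e)" by (cases s)
  show ?thesis by (simp add: d s fp_rmul_gen_def smap_def map_butlast)
qed

lemma smap_fpw: assumes "d \<in> fp_words n k" "a < n" "b < n" shows "smap a b d \<in> fp_words n k"
proof -
  have "successively (\<lambda>x y. fst x \<noteq> fst y) d" using assms(1) by (simp add: fpw_iff)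
  then have "successively (\<lambda>x y. fst x \<noteq> fst y) (smap a b d)"
    unfolding smap_def successively_map by (rule successively_mono) (auto simp: split_beta)
  moreover have "\<forall>x\<in>set (smap a b d). fst x < n \<and> 0 < snd x \<and> snd x < k"
    using assms by (auto simp: smap_def fpw_iff sw_lt split_beta)
  ultimately show ?thesis by (simp add: fpw_iff)
qed

lemma hd_smap: "d \<noteq> [] \<Longrightarrow> fst (hd (smap a b d)) = sw a b (fst (hd d))"
  by (cases d) (auto simp: smap_def split_beta)

lemma rm_append: "d \<noteq> [] \<Longrightarrow> fp_rmul_gen k (p @ d) j = p @ fp_rmul_gen k d j"
  by (induction p) (auto simp: rm_Cons)

abbreviation pre :: "fpword \<Rightarrow> fpword \<Rightarrow> bool" where
  "pre p w \<equiv> take (length p) w = p"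

lemma pre_append: assumes h: "pre p x" shows "pre p (x @ y)"
proof -
  have "length p \<le> length x" using arg_cong[OF h, of length] by simp
  then show ?thesis using h by simp
qed

lemma pre_snoc: assumes "pre p (v @ [s])" "\<not> pre p v" shows "p = v @ [s]"
proof (cases "length p \<le> length v")
  case True then show ?thesis using assms by simp
next
  case False then show ?thesis using assms(1) by simp
qed

lemma pre_iff: "pre p w \<longleftrightarrow> (\<exists>d. w = p @ d)"
proof
  assume "pre p w" then show "\<exists>d. w = p @ d" by (metis append_take_drop_id)
qed auto

definition phi :: "fpword \<Rightarrow> nat \<Rightarrow> nat \<Rightarrow> fpword \<Rightarrow> fpword" where
  "phi p a b w = (if pre p w then p @ smap a b (drop (length p) w) else w)"

definition pii :: "fpword \<Rightarrow> nat \<Rightarrow> nat \<Rightarrow> fpword \<Rightarrow> nat \<Rightarrow> nat" where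
  "pii p a b w = (if pre p w then sw a b else id)"

definition Sm :: "fpword \<Rightarrow> nat \<Rightarrow> nat \<Rightarrow> fpword \<times> nat \<Rightarrow> fpword \<times> nat" where
  "Sm p a b x = (phi p a b (fst x), pii p a b (fst x) (snd x))"

lemma phi_app: "phi p a b (p @ d) = p @ smap a b d" by (simp add: phi_def)

lemma pre_phi: "pre p (phi p a b w) \<longleftrightarrow> pre p w"
  by (auto simp: phi_def)

lemma phi_phi[simp]: "phi p a b (phi p a b w) = w"
proof (cases "pre p w")
  case True
  then obtain d where "w = p @ d" using pre_iff by blast
  then show ?thesis by (simp add: phi_app)
next
  case False then show ?thesis by (simp add: phi_def)
qed

lemma Sm_Sm[simp]: "Sm p a b (Sm p a b x) = x"
  by (cases x) (auto simp: Sm_def pii_def pre_phi)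

lemma bij_invol: assumes "\<And>x. x \<in> A \<Longrightarrow> f x \<in> A" "\<And>x. f (f x) = x" shows "bij_betw f A A"
proof (rule bij_betw_byWitness[where f'=f])
  show "\<forall>a\<in>A. f (f a) = a" "\<forall>a\<in>A. f (f a) = a" using assms(2) by blast+
  show "f ` A \<subseteq> A" "f ` A \<subseteq> A" using assms(1) by blast+
qed

locale Sloc =
  fixes n k :: nat and p :: fpword and a b :: nat
  assumes k2: "k \<ge> 2" and p: "p \<in> fp_words n k" and a: "a < n" and b: "b < n"
    and lastc: "p \<noteq> [] \<Longrightarrow> a \<noteq> fst (last p) \<and> b \<noteq> fst (last p)"
begin

lemma sw_last: assumes "p \<noteq> []" shows "sw a b (fst (last p)) = fst (last p)"
  using lastc[OF assms] by (simp add: sw_def)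

lemma phi_fpw: assumes "w \<in> fp_words n k" shows "phi p a b w \<in> fp_words n k"
proof (cases "pre p w")
  case True
  then obtain d where w: "w = p @ d" using pre_iff by blast
  have d: "d \<in> fp_words n k" and j: "p = [] \<or> d = [] \<or> fst (last p) \<noteq> fst (hd d)"
    using assms by (auto simp: w fpw_append)
  have "p = [] \<or> smap a b d = [] \<or> fst (last p) \<noteq> fst (hd (smap a b d))"
    using j hd_smap sw_last by (metis sw_inj smap_Nil)
  then show ?thesis using smap_fpw[OF d a b] p by (simp add: w phi_app fpw_append)
next
  case False then show ?thesis using assms by (simp add: phi_def)
qed

lemma Sm_V: "x \<in> Tstar_verts n k \<Longrightarrow> Sm p a b x \<in> Tstar_verts n k"
  by (cases x) (auto simp: Sm_def Tv_iff phi_fpw pii_def sw_lt a b)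

lemma Sm_bij: "bij_betw (Sm p a b) (Tstar_verts n k) (Tstar_verts n k)"
  by (rule bij_invol) (auto simp: Sm_V)

lemma notpre_rm: assumes "\<not> pre p u" "pre p (fp_rmul_gen k u j)"
  shows "fp_rmul_gen k u j = p \<and> p \<noteq> [] \<and> fst (last p) = j"
proof (cases "ends j u")
  case False
  then have r: "fp_rmul_gen k u j = u @ [(j,1)]" by (rule rm_not_end)
  then have "p = u @ [(j,1)]" using pre_snoc assms by metis
  then show ?thesis using r by simp
next
  case True
  then obtain v e where u: "u = v @ [(j,e)]" using ends_split by blast
  have nv: "\<not> pre p v" using assms(1) pre_append u by metis
  show ?thesis
  proof (cases "Suc e = k")
    case True
    then have "fp_rmul_gen k u j = v" by (simp add: u rm_end)
    then show ?thesis using nv assms by simp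
  next
    case False
    then have r: "fp_rmul_gen k u j = v @ [(j, Suc e)]" by (simp add: u rm_end)
    then have "p = v @ [(j, Suc e)]" using pre_snoc assms nv by metis
    then show ?thesis using r by simp
  qed
qed

lemma S3: assumes u: "u \<in> fp_words n k"
  shows "phi p a b (fp_rmul_gen k u j) = fp_rmul_gen k (phi p a b u) (pii p a b u j)"
    and "pii p a b (fp_rmul_gen k u j) j = pii p a b u j"
proof -
  have "phi p a b (fp_rmul_gen k u j) = fp_rmul_gen k (phi p a b u) (pii p a b u j) \<and>
        pii p a b (fp_rmul_gen k u j) j = pii p a b u j"
  proof (cases "pre p u")
    case True
    then obtain d where ud: "u = p @ d" using pre_iff by blast
    show ?thesis
    proof (cases "d = []")
      case False
      have r: "fp_rmul_gen k u j = p @ fp_rmul_gen k d j" using False by (simp add: ud rm_append)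
      have "fp_rmul_gen k (phi p a b u) (pii p a b u j) = p @ fp_rmul_gen k (smap a b d) (sw a b j)"
        using False True by (simp add: ud phi_app pii_def rm_append)
      then show ?thesis using r True by (simp add: rm_smap phi_app pii_def ud)
    next
      case True
      then have up: "u = p" using ud by simp
      show ?thesis
      proof (cases "ends j p")
        case True
        then have pne: "p \<noteq> []" and l: "fst (last p) = j" by (auto simp: ends_def)
        obtain v e where pv: "p = v @ [(j,e)]" using True ends_split by blast
        have np: "\<not> pre p (fp_rmul_gen k p j)"
          by (cases "Suc e = k") (auto simp: pv rm_end)
        have sj: "sw a b j = j" using sw_last pne l by simp
        show ?thesis using np sj by (simp add: up phi_def pii_def)
      next
        case False
        have r: "fp_rmul_gen k p j = p @ [(j,1)]" using False by (rule rm_not_end)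
        have ne: "\<not> ends (sw a b j) p"
        proof
          assume "ends (sw a b j) p"
          then have "p \<noteq> []" "fst (last p) = sw a b j" by (auto simp: ends_def)
          then have "sw a b (fst (last p)) = j" by simp
          then show False using sw_last \<open>p \<noteq> []\<close> False \<open>fst (last p) = sw a b j\<close>
            by (simp add: ends_def)
        qed
        have r2: "fp_rmul_gen k p (sw a b j) = p @ [(sw a b j,1)]" using ne by (rule rm_not_end)
        show ?thesis using r r2 by (simp add: up phi_def pii_def)
      qed
    qed
  next
    case False
    show ?thesis
    proof (cases "pre p (fp_rmul_gen k u j)")
      case True
      then have h: "fp_rmul_gen k u j = p" "p \<noteq> []" "fst (last p) = j" using notpre_rm False by auto
      have "sw a b j = j" using sw_last h by simp
      then show ?thesis using False h by (simp add: phi_def pii_def)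
    next
      case nr: False
      show ?thesis using False nr by (simp add: phi_def pii_def)
    qed
  qed
  then show "phi p a b (fp_rmul_gen k u j) = fp_rmul_gen k (phi p a b u) (pii p a b u j)"
    and "pii p a b (fp_rmul_gen k u j) j = pii p a b u j" by auto
qed

lemma pii_inj: "pii p a b w i = pii p a b w j \<longleftrightarrow> i = j"
  by (simp add: pii_def)

lemma phi_inj: "phi p a b w = phi p a b w' \<longleftrightarrow> w = w'"
  by (metis phi_phi)

lemma Sm_aut: "digraph_aut (Tstar_verts n k) (DE n k) (Sm p a b)"
  unfolding digraph_aut_def
proof (intro conjI Sm_bij ballI)
  fix x y assume xV: "x \<in> Tstar_verts n k" and yV: "y \<in> Tstar_verts n k"
  obtain w i where x: "x = (w,i)" by (cases x)
  obtain u j where y: "y = (u,j)" by (cases y)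
  have u: "u \<in> fp_words n k" using yV y by (simp add: Tv_iff)
  have m: "(phi p a b w, pii p a b w i) \<in> Tstar_verts n k" "(phi p a b u, pii p a b u j) \<in> Tstar_verts n k"
    using Sm_V[OF xV] Sm_V[OF yV] by (simp_all add: Sm_def x y)
  have "DE n k (Sm p a b x) (Sm p a b y) \<longleftrightarrow>
        pii p a b w i \<noteq> pii p a b u j \<and> phi p a b w = phi p a b (fp_rmul_gen k u j)"
    using m S3(1)[OF u, of j] by (simp add: DE_def Sm_def x y)
  also have "\<dots> \<longleftrightarrow> i \<noteq> j \<and> w = fp_rmul_gen k u j"
  proof (cases "w = fp_rmul_gen k u j")
    case True
    have "pii p a b w i \<noteq> pii p a b u j \<longleftrightarrow> pii p a b w i \<noteq> pii p a b w j"
      using S3(2)[OF u, of j] True by simp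
    also have "\<dots> \<longleftrightarrow> i \<noteq> j" by (simp only: pii_inj)
    finally show ?thesis using True by simp
  next
    case False then show ?thesis by (simp only: phi_inj) simp
  qed
  also have "\<dots> \<longleftrightarrow> DE n k x y" using xV yV by (auto simp: DE_def x y)
  finally show "DE n k x y \<longleftrightarrow> DE n k (Sm p a b x) (Sm p a b y)" by simp
qed

end


definition Lm :: "nat \<Rightarrow> nat \<Rightarrow> fpword \<times> nat \<Rightarrow> fpword \<times> nat" where
  "Lm k j x = (lm k j (fst x), snd x)"

lemma Lm_pow: "(Lm k j ^^ m) (w,i) = ((lm k j ^^ m) w, i)"
  by (induction m) (auto simp: Lm_def)

lemma bij_pow: assumes A: "\<And>x. x \<in> A \<Longrightarrow> f x \<in> A" and P: "\<And>x. x \<in> A \<Longrightarrow> (f ^^ m) x = x" and m: "m > 0"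
  shows "bij_betw f A A"
proof -
  have Am: "(f ^^ q) x \<in> A" if "x \<in> A" for x q using that by (induction q) (auto simp: A)
  have mm: "m = Suc (m - 1)" using m by simp
  have l: "(f ^^ (m-1)) (f x) = (f ^^ m) x" for x by (subst (2) mm) (simp only: funpow_Suc_right o_apply)
  have r: "f ((f ^^ (m-1)) x) = (f ^^ m) x" for x by (subst (2) mm) simp
  show ?thesis
  proof (rule bij_betw_byWitness[where f'="f ^^ (m-1)"])
    show "\<forall>a\<in>A. (f ^^ (m-1)) (f a) = a" using l P by simp
    show "\<forall>a\<in>A. f ((f ^^ (m-1)) a) = a" using r P by simp
    show "f ` A \<subseteq> A" using A by blast
    show "(f ^^ (m-1)) ` A \<subseteq> A" using Am by blast
  qed
qed

fun stdw :: "nat \<Rightarrow> nat \<Rightarrow> fpword" where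
  "stdw k 0 = []"
| "stdw k (Suc m) = stdw k m @ [(Suc m mod 2, k-1)]"

definition stdv :: "nat \<Rightarrow> nat \<Rightarrow> fpword \<times> nat" where
  "stdv k m = (stdw k m, m mod 2)"

lemma stdw_len[simp]: "length (stdw k m) = m"
  by (induction m) auto

lemma stdw_last: "m > 0 \<Longrightarrow> stdw k m \<noteq> [] \<and> fst (last (stdw k m)) = m mod 2"
  by (cases m) auto

context
  fixes n k :: nat
  assumes k2: "k \<ge> 2" and n3: "n \<ge> 3"
begin

abbreviation "VV \<equiv> Tstar_verts n k"
abbreviation "aut g \<equiv> digraph_aut VV (DE n k) g"

lemma aut_bij: "aut g \<Longrightarrow> bij_betw g VV VV" by (simp add: digraph_aut_def)
lemma aut_V: "aut g \<Longrightarrow> x \<in> VV \<Longrightarrow> g x \<in> VV" using aut_bij bij_betwE by blast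
lemma aut_arc: "aut g \<Longrightarrow> x \<in> VV \<Longrightarrow> y \<in> VV \<Longrightarrow> DE n k x y \<longleftrightarrow> DE n k (g x) (g y)"
  by (simp add: digraph_aut_def)

lemma aut_comp: assumes "aut f" "aut g" shows "aut (f \<circ> g)"
  unfolding digraph_aut_def
proof (intro conjI ballI)
  show "bij_betw (f \<circ> g) VV VV" using aut_bij[OF assms(1)] aut_bij[OF assms(2)] by (rule bij_betw_trans[rotated])
  fix x y assume "x \<in> VV" "y \<in> VV"
  then show "DE n k x y \<longleftrightarrow> DE n k ((f \<circ> g) x) ((f \<circ> g) y)"
    using aut_arc[OF assms(2)] aut_arc[OF assms(1)] aut_V[OF assms(2)] by simp
qed

lemma aut_id: "aut id" by (simp add: digraph_aut_def)

lemma aut_pow: "aut g \<Longrightarrow> aut (g ^^ m)"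
  by (induction m) (auto simp: aut_id aut_comp)

lemma aut_inv: assumes "aut g" shows "aut (inv_into VV g)"
  unfolding digraph_aut_def
proof (intro conjI ballI)
  show "bij_betw (inv_into VV g) VV VV" using aut_bij[OF assms] by (rule bij_betw_inv_into)
  fix x y assume xy: "x \<in> VV" "y \<in> VV"
  have img: "g ` VV = VV" using aut_bij[OF assms] by (simp add: bij_betw_def)
  have iV: "inv_into VV g z \<in> VV" if "z \<in> VV" for z using that img by (metis inv_into_into)
  have gi: "g (inv_into VV g z) = z" if "z \<in> VV" for z using that img by (simp add: f_inv_into_f)
  have "DE n k (inv_into VV g x) (inv_into VV g y) \<longleftrightarrow> DE n k (g (inv_into VV g x)) (g (inv_into VV g y))"
    using aut_arc[OF assms iV[OF xy(1)] iV[OF xy(2)]] .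
  then show "DE n k x y \<longleftrightarrow> DE n k (inv_into VV g x) (inv_into VV g y)"
    using gi xy by simp
qed

lemma Lm_aut: assumes j: "j < n" shows "aut (Lm k j)"
  unfolding digraph_aut_def
proof (intro conjI ballI)
  have LV: "Lm k j x \<in> VV" if "x \<in> VV" for x
    using that lm_fpw[OF _ j k2] by (cases x) (simp add: Lm_def Tv_iff)
  show "bij_betw (Lm k j) VV VV"
  proof (rule bij_pow[OF LV])
    fix x assume xV: "x \<in> VV"
    obtain w i where x: "x = (w,i)" by (cases x)
    have "w \<in> fp_words n k" using xV x by (simp add: Tv_iff)
    then show "(Lm k j ^^ k) x = x" using lp_k[OF _ k2] by (simp add: Lm_pow x)
  qed (use k2 in auto)
  fix x y assume xV: "x \<in> VV" and yV: "y \<in> VV"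
  obtain w i where x: "x = (w,i)" by (cases x)
  obtain u j' where y: "y = (u,j')" by (cases y)
  have w: "w \<in> fp_words n k" and u: "u \<in> fp_words n k" "j' < n" using xV yV x y by (auto simp: Tv_iff)
  have ru: "fp_rmul_gen k u j' \<in> fp_words n k" using rm_fpw[OF u k2] .
  have "DE n k (Lm k j x) (Lm k j y) \<longleftrightarrow> i \<noteq> j' \<and> lm k j w = lm k j (fp_rmul_gen k u j')"
    using LV[OF xV] LV[OF yV] lm_rm_comm[OF u(1), of j j'] by (simp add: DE_def Lm_def x y)
  also have "\<dots> \<longleftrightarrow> i \<noteq> j' \<and> w = fp_rmul_gen k u j'"
    using lm_inj[OF w ru k2] by blast
  also have "\<dots> \<longleftrightarrow> DE n k x y" using xV yV by (simp add: DE_def x y)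
  finally show "DE n k x y \<longleftrightarrow> DE n k (Lm k j x) (Lm k j y)" by simp
qed

lemma lm_pow_Cons: "0 < e \<Longrightarrow> e + m < k \<Longrightarrow> (lm k x ^^ m) ((x,e) # r) = (x, e + m) # r"
  by (induction m) (auto simp: lm_Cons)

lemma lm_pow_kill: assumes "0 < e" "e < k" shows "(lm k x ^^ (k - e)) ((x,e) # r) = r"
proof -
  have ke: "k - e = Suc (k - e - 1)" using assms by simp
  have "(lm k x ^^ (k - e)) ((x,e) # r) = lm k x ((lm k x ^^ (k - e - 1)) ((x,e) # r))"
    by (subst ke) simp
  also have "\<dots> = lm k x ((x, k - 1) # r)" using assms lm_pow_Cons[of e "k - e - 1" x r] by simp
  also have "\<dots> = r" using k2 by (simp add: lm_Cons)
  finally show ?thesis .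
qed

lemma to_empty: "w \<in> fp_words n k \<Longrightarrow> \<exists>g. aut g \<and> (\<forall>i. g (w,i) = ([],i))"
proof (induction w)
  case Nil then show ?case using aut_id by auto
next
  case (Cons s r)
  obtain x e where s: "s = (x,e)" by (cases s)
  have h: "r \<in> fp_words n k" "x < n" "0 < e" "e < k" using Cons.prems by (auto simp: fpw_Cons s)
  obtain g where g: "aut g" "\<forall>i. g (r,i) = ([],i)" using Cons.IH h(1) by blast
  have "aut (g \<circ> (Lm k x ^^ (k - e)))" using aut_comp[OF g(1) aut_pow[OF Lm_aut[OF h(2)]]] .
  moreover have "\<forall>i. (g \<circ> (Lm k x ^^ (k - e))) (s # r, i) = ([], i)"
    using g(2) lm_pow_kill[OF h(3) h(4)] by (simp add: Lm_pow s)
  ultimately show ?case by blast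
qed

lemma stdw_fpw: "stdw k m \<in> fp_words n k"
proof (induction m)
  case 0 then show ?case by simp
next
  case (Suc m)
  have "Suc m mod 2 \<noteq> m mod 2" by presburger
  then have "stdw k m = [] \<or> fst (last (stdw k m)) \<noteq> Suc m mod 2"
    using stdw_last[of m k] by (cases m) auto
  then show ?case using Suc k2 n3 by (auto simp: fpw_append)
qed

lemma stdv_V: "stdv k m \<in> VV"
  using stdw_fpw n3 by (simp add: stdv_def Tv_iff)

lemma to_std: "is_karc VV (DE n k) m xs \<Longrightarrow> \<exists>g. aut g \<and> map g xs = map (stdv k) [0..<Suc m]"
proof (induction m arbitrary: xs)
  case 0
  have l: "length xs = Suc 0" "set xs \<subseteq> VV" using 0 by (auto simp: is_karc_def)
  then obtain x where xs: "xs = [x]" by (auto simp: length_Suc_conv)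
  then have xV: "x \<in> VV" using l by simp
  obtain w i where x: "x = (w,i)" by (cases x)
  have w: "w \<in> fp_words n k" "i < n" using xV x by (auto simp: Tv_iff)
  obtain g where g: "aut g" "\<forall>i. g (w,i) = ([],i)" using to_empty w(1) by blast
  interpret S: Sloc n k "[]" i 0 using k2 w n3 by unfold_locales auto
  have "aut (Sm [] i 0 \<circ> g)" using aut_comp[OF S.Sm_aut g(1)] .
  moreover have "(Sm [] i 0 \<circ> g) x = stdv k 0"
    using g(2) by (simp add: x Sm_def phi_def pii_def sw_def stdv_def)
  ultimately show ?case by (auto simp: xs)
next
  case (Suc m)
  define ys where "ys = butlast xs"
  define x where "x = last xs"
  have len: "length xs = Suc (Suc m)" and sub: "set xs \<subseteq> VV"
    and arcs: "\<forall>j<Suc m. DE n k (xs ! j) (xs ! Suc j)" using Suc.prems by (auto simp: is_karc_def)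
  have xne: "xs \<noteq> []" using len by auto
  have xs: "xs = ys @ [x]" using xne by (simp add: ys_def x_def)
  have lys: "length ys = Suc m" using len by (simp add: ys_def)
  have ysk: "is_karc VV (DE n k) m ys"
    unfolding is_karc_def using lys sub arcs
    by (auto simp: ys_def nth_butlast dest: in_set_butlastD)
  have xV: "x \<in> VV" using sub xne by (auto simp: x_def)
  have ymV: "ys ! m \<in> VV" using sub lys xs by (auto simp: nth_append)
  have arc: "DE n k (ys ! m) x"
    using arcs[rule_format, of m] xs lys by (simp add: nth_append)
  obtain g where g: "aut g" "map g ys = map (stdv k) [0..<Suc m]" using Suc.IH ysk by blast
  have gym: "g (ys ! m) = stdv k m"
    using arg_cong[OF g(2), of "\<lambda>l. l ! m"] lys by (simp del: upt_Suc)
  have "DE n k (stdv k m) (g x)" using aut_arc[OF g(1) ymV xV] arc gym by simp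
  then obtain u j where gx: "g x = (u,j)" and uj: "u \<in> fp_words n k" "j < n" "j \<noteq> m mod 2"
    "stdw k m = fp_rmul_gen k u j"
    by (cases "g x") (auto simp: DE_def stdv_def Tv_iff)
  have ne: "\<not> ends j (stdw k m)"
    using stdw_last[of m k] uj(3) by (cases m) (auto simp: ends_def)
  have "u = rp k j (k-1) (stdw k m)" using rp_pred(1)[OF uj(1) k2, of j] uj(4) by simp
  also have "\<dots> = stdw k m @ [(j, k-1)]" using rp_not_end[OF ne] k2 by simp
  finally have u: "u = stdw k m @ [(j, k-1)]" .
  define c where "c = Suc m mod 2"
  have c1: "c < n" using n3 by (simp add: c_def)
  have c2: "c \<noteq> m mod 2" unfolding c_def by presburger
  note c = c1 c2
  interpret S: Sloc n k "stdw k m" j c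
  proof
    show "k \<ge> 2" by (rule k2)
    show "stdw k m \<in> fp_words n k" by (rule stdw_fpw)
    show "j < n" "c < n" using uj c by auto
    assume "stdw k m \<noteq> []"
    then have "m > 0" by (cases m) auto
    then show "j \<noteq> fst (last (stdw k m)) \<and> c \<noteq> fst (last (stdw k m))"
      using stdw_last[of m k] uj(3) c by auto
  qed
  have fix1: "Sm (stdw k m) j c (stdv k t) = stdv k t" if "t < Suc m" for t
  proof (cases "t = m")
    case True
    have "sw j c (m mod 2) = m mod 2" using uj(3) c(2) by (simp add: sw_def)
    then show ?thesis using True by (simp add: Sm_def stdv_def phi_def pii_def)
  next
    case False
    have "length (take (length (stdw k m)) (stdw k t)) = t" using that by simp
    then have "\<not> pre (stdw k m) (stdw k t)" using False by (metis stdw_len)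
    then show ?thesis by (simp add: Sm_def stdv_def phi_def pii_def)
  qed
  have fix2: "Sm (stdw k m) j c (g x) = stdv k (Suc m)"
    by (simp add: gx u Sm_def phi_def pii_def sw_def stdv_def c_def)
  have "aut (Sm (stdw k m) j c \<circ> g)" using aut_comp[OF S.Sm_aut g(1)] .
  moreover have "map (Sm (stdw k m) j c \<circ> g) xs = map (stdv k) [0..<Suc (Suc m)]"
  proof -
    have "map (Sm (stdw k m) j c \<circ> g) xs = map (Sm (stdw k m) j c) (map g ys) @ [Sm (stdw k m) j c (g x)]"
      by (simp add: xs)
    also have "\<dots> = map (Sm (stdw k m) j c) (map (stdv k) [0..<Suc m]) @ [stdv k (Suc m)]"
      by (simp only: g(2) fix2)
    also have "map (Sm (stdw k m) j c) (map (stdv k) [0..<Suc m]) = map (stdv k) [0..<Suc m]"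
      using fix1 by (simp del: upt_Suc)
    finally have "map (Sm (stdw k m) j c \<circ> g) xs = map (stdv k) [0..<Suc m] @ [stdv k (Suc m)]" .
    moreover have "map (stdv k) [0..<Suc (Suc m)] = map (stdv k) [0..<Suc m] @ [stdv k (Suc m)]"
      by (simp only: upt_Suc_append[of 0 "Suc m"] zero_le map_append list.map)
    ultimately show ?thesis by (simp only:)
  qed
  ultimately show ?case by blast
qed

lemma HAT_D: "highly_arc_transitive VV (DE n k)"
  unfolding highly_arc_transitive_def
proof (intro allI impI)
  fix m xs ys assume H: "is_karc VV (DE n k) m xs \<and> is_karc VV (DE n k) m ys"
  obtain g1 where g1: "aut g1" "map g1 xs = map (stdv k) [0..<Suc m]" using H to_std by blast
  obtain g2 where g2: "aut g2" "map g2 ys = map (stdv k) [0..<Suc m]" using H to_std by blast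
  have inj: "inj_on g2 VV" using aut_bij[OF g2(1)] by (simp add: bij_betw_def)
  have ysV: "set ys \<subseteq> VV" using H by (simp add: is_karc_def)
  have "aut (inv_into VV g2 \<circ> g1)" using aut_comp[OF aut_inv[OF g2(1)] g1(1)] .
  moreover have "map (inv_into VV g2 \<circ> g1) xs = ys"
  proof -
    have "map (inv_into VV g2 \<circ> g1) xs = map (inv_into VV g2) (map g1 xs)" by simp
    also have "\<dots> = map (inv_into VV g2) (map g2 ys)" using g1(2) g2(2) by (simp del: upt_Suc)
    also have "\<dots> = ys"
    proof -
      have "\<forall>z\<in>set ys. inv_into VV g2 (g2 z) = z"
      proof
        fix z assume "z \<in> set ys"
        then have "z \<in> VV" by (rule subsetD[OF ysV])
        then show "inv_into VV g2 (g2 z) = z" by (rule inv_into_f_f[OF inj])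
      qed
      then show ?thesis by (simp add: map_idI)
    qed
    finally show ?thesis .
  qed
  ultimately show "\<exists>g. aut g \<and> map g xs = ys" by blast
qed

end

theorem corollary5p4:
  fixes n k :: nat
  assumes "n \<ge> 3" and "k \<ge> 2"
  shows "highly_arc_transitive (M_verts n k) (M_arc n k) \<and>
         (\<forall>x\<in>M_verts n k. in_degree (M_verts n k) (M_arc n k) x = n - 1 \<and>
                           out_degree (M_verts n k) (M_arc n k) x = n - 1) \<and>
         \<not> has_property_Z (M_verts n k) (M_arc n k)"
proof -
  note n3 = assms(1) and k2 = assms(2)
  interpret I: diso "Tstar_verts n k" "DE n k" "M_verts n k" "M_arc n k" "hM k"
  proof
    show "bij_betw (hM k) (Tstar_verts n k) (M_verts n k)"
      unfolding bij_betw_def using hM_inj[OF k2] M_verts_eq[OF k2] by simp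
    show "DE n k x y \<longleftrightarrow> M_arc n k (hM k x) (hM k y)" if "x \<in> Tstar_verts n k" "y \<in> Tstar_verts n k" for x y
      using hM_arc[OF k2 that] by simp
    show "M_arc n k X Y \<Longrightarrow> X \<in> M_verts n k \<and> Y \<in> M_verts n k" for X Y by (simp add: M_arc_def)
  qed
  have 1: "highly_arc_transitive (M_verts n k) (M_arc n k)" using I.HAT HAT_D[OF k2 n3] by blast
  have 2: "\<forall>X\<in>M_verts n k. in_degree (M_verts n k) (M_arc n k) X = n - 1 \<and>
                           out_degree (M_verts n k) (M_arc n k) X = n - 1"
  proof
    fix X assume "X \<in> M_verts n k"
    then obtain x where x: "x \<in> Tstar_verts n k" "X = hM k x" using M_verts_eq[OF k2] by auto
    show "in_degree (M_verts n k) (M_arc n k) X = n - 1 \<and> out_degree (M_verts n k) (M_arc n k) X = n - 1"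
      using I.in_deg[OF x(1)] I.out_deg[OF x(1)] D_in_deg[OF k2 x(1)] D_out_deg[OF k2 x(1)] x(2) by simp
  qed
  have 3: "\<not> has_property_Z (M_verts n k) (M_arc n k)"
    using I.Z D_noZ[OF k2 n3] by blast
  show ?thesis using 1 2 3 by blast
qed


end
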